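(* Let $\Gamma\subset\mathbb R^n$ be a closed, acute, convex cone and, for $s\in\mathbb R$, let $H^s_\Gamma(\mathbb R^n)=\{f\in H^s(\mathbb R^n):\operatorname{supp}\widehat f\subset\Gamma\}$. (a) Let $s_1\le 0$, $s_2\le\frac n2$, $f\in H^{s_1}_\Gamma(\mathbb R^n)$, $g\in H^{s_2}_\Gamma(\mathbb R^n)$. Then $fg\in H^\sigma_\Gamma(\mathbb R^n)$ for every $\sigma<-\frac n2+s_1+s_2$. (b) Let $s_1\ge0$, $s_2\in\mathbb R$, $f\in H^{s_1}_\Gamma(\mathbb R^n)$, $g\in H^{s_2}_\Gamma(\mathbb R^n)$. Then $fg\in H^\sigma_\Gamma(\mathbb R^n)$ for every $\sigma$ with $\sigma\le s_1$ and $\sigma<-\frac n2+s_2$. In both cases, for each such $\sigma$ there is a constant $C>0$ (independent of $f,g$) with $\|fg\|_{H^\sigma}\le C\|f\|_{H^{s_1}}\|g\|_{H^{s_2}}$.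
   Context: Fourier transform $\widehat f(\xi)=\int e^{-2\pi i x\cdot\xi}f(x)\,dx$; $\langle\xi\rangle=(1+|\xi|^2)^{1/2}$; $H^s(\mathbb R^n)=\{f\in\mathcal S'(\mathbb R^n):\langle\xi\rangle^s\widehat f\in L^2\}$ with norm $\|\langle\xi\rangle^s\widehat f\|_{L^2}$. A cone $\Gamma$ (with vertex $0$) is acute if it is contained in a half-space $\{\xi:\xi\cdot e\ge \alpha|\xi|\}$ for some unit vector $e$ and $\alpha>0$ (equivalently, for closed convex cones, it contains no straight line). The product $fg$ is the Fourier product $\mathcal F^{-1}(\widehat f*\widehat g)$, which is well defined when $\widehat f,\widehat g$ are tempered distributions supported in $\Gamma$. *)

theory Defs
  imports "HOL-Analysis.Analysis"
begin

text \<open>Everything is expressed on the Fourier side: an element f of H^s is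
  represented by its Fourier transform F = hat f, a measurable function
  with weighted square integrable modulus.\<close>

definition japanese :: "'a::euclidean_space \<Rightarrow> real" where
  "japanese \<xi> = sqrt (1 + (norm \<xi>)\<^sup>2)"

definition acute_cone :: "'a::euclidean_space set \<Rightarrow> bool" where
  "acute_cone \<Gamma> \<longleftrightarrow> (\<exists>e \<alpha>. norm e = 1 \<and> \<alpha> > 0 \<and> \<Gamma> \<subseteq> {\<xi>. \<xi> \<bullet> e \<ge> \<alpha> * norm \<xi>})"

definition in_Hs :: "real \<Rightarrow> ('a::euclidean_space \<Rightarrow> complex) \<Rightarrow> bool" where
  "in_Hs s F \<longleftrightarrow> F \<in> borel_measurable lborel \<and>
      integrable lborel (\<lambda>\<xi>. (japanese \<xi> powr s * cmod (F \<xi>))\<^sup>2)"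

text \<open>H^s_Gamma: additionally supp F \<subseteq> Gamma (Gamma closed, so this means F = 0 a.e.
  outside Gamma).\<close>
definition in_Hs_Gamma :: "'a::euclidean_space set \<Rightarrow> real \<Rightarrow> ('a \<Rightarrow> complex) \<Rightarrow> bool" where
  "in_Hs_Gamma \<Gamma> s F \<longleftrightarrow> in_Hs s F \<and> (AE \<xi> in lborel. \<xi> \<notin> \<Gamma> \<longrightarrow> F \<xi> = 0)"

definition Hs_norm :: "real \<Rightarrow> ('a::euclidean_space \<Rightarrow> complex) \<Rightarrow> real" where
  "Hs_norm s F = sqrt (\<integral>\<xi>. (japanese \<xi> powr s * cmod (F \<xi>))\<^sup>2 \<partial>lborel)"

text \<open>Fourier transform of the product fg: the convolution hat f * hat g.\<close>
definition fourier_product :: "('a::euclidean_space \<Rightarrow> complex) \<Rightarrow> ('a \<Rightarrow> complex) \<Rightarrow> 'a \<Rightarrow> complex" where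
  "fourier_product F G = (\<lambda>\<xi>. \<integral>\<eta>. F \<eta> * G (\<xi> - \<eta>) \<partial>lborel)"

definition product_estimate :: "'a::euclidean_space set \<Rightarrow> real \<Rightarrow> real \<Rightarrow> real \<Rightarrow> bool" where
  "product_estimate \<Gamma> s1 s2 \<sigma> \<longleftrightarrow>
     (\<exists>C>0. \<forall>F G. in_Hs_Gamma \<Gamma> s1 F \<and> in_Hs_Gamma \<Gamma> s2 G \<longrightarrow>
        in_Hs_Gamma \<Gamma> \<sigma> (fourier_product F G) \<and>
        Hs_norm \<sigma> (fourier_product F G) \<le> C * Hs_norm s1 F * Hs_norm s2 G)"

end

theory Submission
  imports Defs
begin

lemma jp_ge1: "japanese x \<ge> 1"
  unfolding japanese_def by simp
lemma jp_pos: "japanese x > 0"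
  using jp_ge1[of x] by linarith
lemma jp_gt_norm: "norm x < japanese x"
  unfolding japanese_def by (rule real_less_rsqrt) simp
lemma jp_cont: "continuous_on UNIV japanese"
  unfolding japanese_def by (intro continuous_intros)
lemma jp_meas[measurable]: "japanese \<in> borel_measurable borel"
  using jp_cont by (rule borel_measurable_continuous_onI)

lemma ball_borel[measurable]: "ball (c::'a::metric_space) r \<in> sets borel"
  by auto

lemma J_finite:
  assumes t: "t > real DIM('a)"
  shows "(\<integral>\<^sup>+\<zeta>. ennreal (japanese (\<zeta>::'a::euclidean_space) powr (-t)) \<partial>lborel) < \<infinity>"
proof -
  let ?n = "DIM('a)"
  define c where "c = (\<lambda>j::nat. ennreal (2 powr (- real j * t)))"
  define B where "B = (\<lambda>j::nat. ball (0::'a) (2 ^ (j+1)))"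
  have tpos: "t > 0" using t by (smt (verit) of_nat_0_le_iff)
  have pw: "ennreal (japanese \<zeta> powr (-t)) \<le> (\<Sum>j. c j * indicator (B j) \<zeta>)" for \<zeta>
  proof -
    define k where "k = nat \<lfloor>log 2 (japanese \<zeta>)\<rfloor>"
    have l0: "log 2 (japanese \<zeta>) \<ge> 0" using jp_ge1[of \<zeta>] by simp
    have k1: "real k \<le> log 2 (japanese \<zeta>)" unfolding k_def using l0 by linarith
    have k2: "log 2 (japanese \<zeta>) < real k + 1" unfolding k_def using l0 by linarith
    have a1: "2 powr real k \<le> japanese \<zeta>"
      using k1 jp_pos[of \<zeta>] by (subst (asm) le_log_iff) auto
    have a2: "japanese \<zeta> < 2 powr (real k + 1)"
      using k2 jp_pos[of \<zeta>] by (subst (asm) log_less_iff) auto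
    have "japanese \<zeta> powr (-t) \<le> (2 powr real k) powr (-t)"
      using a1 tpos by (intro powr_mono2') auto
    also have "\<dots> = 2 powr (- real k * t)" by (simp add: powr_powr)
    finally have e1: "japanese \<zeta> powr (-t) \<le> 2 powr (- real k * t)" .
    have "2 powr (real k + 1) = 2 ^ (k+1)"
      by (metis of_nat_Suc powr_realpow Suc_eq_plus1 add.commute zero_less_numeral)
    then have "norm \<zeta> < 2 ^ (k+1)"
      using jp_gt_norm[of \<zeta>] a2 by linarith
    then have "\<zeta> \<in> B k" unfolding B_def by simp
    then have "ennreal (japanese \<zeta> powr (-t)) \<le> c k * indicator (B k) \<zeta>"
      unfolding c_def using e1 by simp
    also have "\<dots> \<le> (\<Sum>j<Suc k. c j * indicator (B j) \<zeta>)" by simp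
    also have "\<dots> \<le> (\<Sum>j. c j * indicator (B j) \<zeta>)"
      by (intro sum_le_suminf summableI) auto
    finally show ?thesis .
  qed
  define V where "V = unit_ball_vol (real ?n)"
  have "(\<integral>\<^sup>+\<zeta>. ennreal (japanese (\<zeta>::'a) powr (-t)) \<partial>lborel) \<le> (\<integral>\<^sup>+\<zeta>. (\<Sum>j. c j * indicator (B j) \<zeta>) \<partial>lborel)"
    by (rule nn_integral_mono, rule pw)
  also have "\<dots> = (\<Sum>j. \<integral>\<^sup>+\<zeta>. c j * indicator (B j) \<zeta> \<partial>lborel)"
    by (rule nn_integral_suminf) (unfold B_def, measurable)
  also have "\<dots> = (\<Sum>j. c j * emeasure lborel (B j))"
    by (rule suminf_cong, rule nn_integral_cmult_indicator) (simp add: B_def)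
  also have "\<dots> = (\<Sum>j. ennreal (V * 2 ^ ?n * (2 powr (real ?n - t)) ^ j))"
  proof (rule suminf_cong)
    fix j
    have V0: "V \<ge> 0" unfolding V_def by simp
    have "c j * emeasure lborel (B j) = ennreal (2 powr (- real j * t)) * ennreal (V * (2 ^ (j+1)) ^ ?n)"
      unfolding c_def B_def V_def by (subst emeasure_ball) auto
    also have "\<dots> = ennreal (2 powr (- real j * t) * (V * (2 ^ (j+1)) ^ ?n))"
      by (rule ennreal_mult''[symmetric]) (simp add: V0)
    also have "2 powr (- real j * t) * (V * (2 ^ (j+1)) ^ ?n) = V * 2 ^ ?n * (2 powr (real ?n - t)) ^ j"
    proof -
      have e1: "((2::real) ^ (j+1)) ^ ?n = 2 ^ ?n * 2 powr (real j * real ?n)"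
        by (simp add: powr_realpow[symmetric] powr_powr powr_add[symmetric] algebra_simps)
      have e2: "(2 powr (real ?n - t)) ^ j = 2 powr (real j * real ?n) * 2 powr (- real j * t)"
        by (simp add: powr_realpow[symmetric] powr_powr powr_add[symmetric] algebra_simps)
      show ?thesis unfolding e1 e2 by simp
    qed
    finally show "c j * emeasure lborel (B j) = ennreal (V * 2 ^ ?n * (2 powr (real ?n - t)) ^ j)" .
  qed
  also have "\<dots> < \<infinity>"
  proof -
    have r: "2 powr (real ?n - t) < 1" using t by (simp add: powr_less_one)
    have "summable (\<lambda>j. V * 2 ^ ?n * (2 powr (real ?n - t)) ^ j)"
      using r by (intro summable_mult summable_geometric) simp
    moreover have "\<And>j. 0 \<le> V * 2 ^ ?n * (2 powr (real ?n - t)) ^ j" by (simp add: V_def)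
    ultimately have "(\<Sum>j. ennreal (V * 2 ^ ?n * (2 powr (real ?n - t)) ^ j)) \<noteq> top"
      by (rule ennreal_suminf_neq_top)
    then show ?thesis by (simp add: top.not_eq_extremum)
  qed
  finally show ?thesis .
qed

lemma nn_integral_reflect:
  fixes f :: "'a::euclidean_space \<Rightarrow> ennreal"
  assumes [measurable]: "f \<in> borel_measurable borel"
  shows "(\<integral>\<^sup>+x. f (t - x) \<partial>lborel) = (\<integral>\<^sup>+x. f x \<partial>lborel)"
proof -
  have "(\<integral>\<^sup>+x. f x \<partial>lborel) = (\<integral>\<^sup>+x. f (t - x) \<partial>lborel)"
    by (subst lborel_affine[of "-1" t]) (simp_all add: nn_integral_density nn_integral_distr)
  then show ?thesis by simp
qed

lemma nn_integral_shift:
  fixes f :: "'a::euclidean_space \<Rightarrow> ennreal"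
  assumes [measurable]: "f \<in> borel_measurable borel"
  shows "(\<integral>\<^sup>+x. f (x - t) \<partial>lborel) = (\<integral>\<^sup>+x. f x \<partial>lborel)"
proof -
  have "(\<integral>\<^sup>+x. f x \<partial>lborel) = (\<integral>\<^sup>+x. f (- t + x) \<partial>lborel)"
    by (subst lborel_affine[of "1" "-t"]) (simp_all add: nn_integral_density nn_integral_distr)
  then show ?thesis by simp
qed

lemma AE_reflect:
  fixes P :: "'a::euclidean_space \<Rightarrow> bool"
  assumes [measurable]: "Measurable.pred borel P" and ae: "AE x in lborel. P x"
  shows "AE x in lborel. P (t - x)"
  using ae by (subst (asm) lborel_affine[of "-1" t]) (simp_all add: AE_density AE_distr_iff)

lemma powr_le_max:
  fixes y X p :: real
  assumes "1 \<le> y" "y \<le> X"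
  shows "y powr p \<le> X powr (max p 0)"
proof (cases "p \<ge> 0")
  case True
  then show ?thesis using assms by (simp add: max_def powr_mono2)
next
  case False
  then have "y powr p \<le> 1" using assms powr_mono[of p 0 y] by simp
  moreover have "X \<noteq> 0" using assms by linarith
  ultimately show ?thesis using False by (simp add: max_def)
qed

lemma powr_le_one_neg: "1 \<le> (x::real) \<Longrightarrow> e \<le> 0 \<Longrightarrow> x powr e \<le> 1"
  using powr_mono[of e 0 x] by simp

lemma powr_div_split: "0 < x \<Longrightarrow> 0 < (\<alpha>::real) \<Longrightarrow> (x / \<alpha>) powr e = x powr e * \<alpha> powr (- e)"
  by (simp add: powr_divide powr_minus_divide)

lemma pointwise_a:
  fixes N s1 s2 \<sigma> \<alpha> :: real
  assumes N: "N \<ge> 0" and h1: "s1 \<le> 0" and h2: "s2 \<le> N / 2" and h3: "\<sigma> < - N / 2 + s1 + s2"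
    and al: "0 < \<alpha>" "\<alpha> \<le> 1"
  shows "\<exists>C>0. \<exists>t>N. \<forall>x a b. 1 \<le> x \<longrightarrow> 1 \<le> a \<longrightarrow> 1 \<le> b \<longrightarrow> a \<le> x / \<alpha> \<longrightarrow> b \<le> x / \<alpha>
     \<longrightarrow> (x \<le> 3 * a \<or> x \<le> 3 * b) \<longrightarrow>
     x powr (2 * \<sigma>) * a powr (- 2 * s1) * b powr (- 2 * s2) \<le> C * (a powr (- t) + b powr (- t))"
proof -
  define \<delta> where "\<delta> = - N / 2 + s1 + s2 - \<sigma>"
  have dpos: "\<delta> > 0" using h3 unfolding \<delta>_def by simp
  define t where "t = N + \<delta>"
  define e where "e = t - 2 * s1 - 2 * s2"
  define C where "C = \<alpha> powr (- e)"
  have "C > 0" unfolding C_def using al by simp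
  moreover have "t > N" unfolding t_def using dpos by simp
  moreover
  { fix x a b :: real
    assume x: "1 \<le> x" and a: "1 \<le> a" and b: "1 \<le> b" and aX: "a \<le> x / \<alpha>" and bX: "b \<le> x / \<alpha>"
    define X where "X = x / \<alpha>"
    have X1: "1 \<le> X" unfolding X_def using x al by (simp add: le_divide_eq)
    have A: "a powr (- 2 * s1) \<le> X powr (- 2 * s1)"
      using aX a h1 unfolding X_def by (intro powr_mono2) auto
    have B: "b powr (t - 2 * s2) \<le> X powr (t - 2 * s2)"
      using bX b h2 dpos unfolding X_def t_def by (intro powr_mono2) auto
    have "x powr (2 * \<sigma>) * a powr (- 2 * s1) * b powr (- 2 * s2)
        = x powr (2 * \<sigma>) * a powr (- 2 * s1) * (b powr (- t) * b powr (t - 2 * s2))"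
      by (simp add: powr_add[symmetric])
    also have "\<dots> \<le> x powr (2 * \<sigma>) * X powr (- 2 * s1) * (b powr (- t) * X powr (t - 2 * s2))"
      using A B by (intro mult_mono) auto
    also have "\<dots> = (x powr (2 * \<sigma>) * X powr e) * b powr (- t)"
      unfolding e_def by (simp add: powr_add[symmetric] algebra_simps)
    also have "x powr (2 * \<sigma>) * X powr e = x powr (2 * \<sigma> + e) * C"
      unfolding X_def C_def using x al by (simp add: powr_div_split powr_add)
    also have "x powr (2 * \<sigma> + e) \<le> 1"
      using x dpos unfolding e_def t_def \<delta>_def by (intro powr_le_one_neg) auto
    then have "x powr (2 * \<sigma> + e) * C * b powr (- t) \<le> 1 * C * b powr (- t)"
      using \<open>C > 0\<close> by (intro mult_right_mono) auto
    also have "\<dots> \<le> C * (a powr (- t) + b powr (- t))"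
      using \<open>C > 0\<close> by (simp add: distrib_left)
    finally have "x powr (2 * \<sigma>) * a powr (- 2 * s1) * b powr (- 2 * s2) \<le> C * (a powr (- t) + b powr (- t))" .
  }
  ultimately show ?thesis by blast
qed

lemma pointwise_b:
  fixes N s1 s2 \<sigma> \<alpha> :: real
  assumes N: "N \<ge> 0" and h1: "s1 \<ge> 0" and h2: "\<sigma> \<le> s1" and h3: "\<sigma> < - N / 2 + s2"
    and al: "0 < \<alpha>" "\<alpha> \<le> 1"
  shows "\<exists>C>0. \<exists>t>N. \<forall>x a b. 1 \<le> x \<longrightarrow> 1 \<le> a \<longrightarrow> 1 \<le> b \<longrightarrow> a \<le> x / \<alpha> \<longrightarrow> b \<le> x / \<alpha>
     \<longrightarrow> (x \<le> 3 * a \<or> x \<le> 3 * b) \<longrightarrow>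
     x powr (2 * \<sigma>) * a powr (- 2 * s1) * b powr (- 2 * s2) \<le> C * (a powr (- t) + b powr (- t))"
proof -
  define \<delta> where "\<delta> = s2 - N / 2 - \<sigma>"
  have dpos: "\<delta> > 0" using h3 unfolding \<delta>_def by simp
  define t where "t = N + \<delta>"
  define m1 where "m1 = max (t - 2 * s2) 0"
  define m2 where "m2 = max (t - 2 * s1) 0"
  define K2 where "K2 = (if s2 \<ge> 0 then 3 powr (2 * s2) else \<alpha> powr (2 * s2))"
  define C1 where "C1 = 3 powr (2 * s1) * \<alpha> powr (- m1)"
  define C2 where "C2 = K2 * \<alpha> powr (- m2)"
  define C where "C = C1 + C2"
  have C1p: "C1 > 0" unfolding C1_def using al by simp
  have C2p: "C2 > 0" unfolding C2_def K2_def using al by simp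
  have "C > 0" unfolding C_def using C1p C2p by simp
  moreover have "t > N" unfolding t_def using dpos by simp
  moreover
  { fix x a b :: real
    assume x: "1 \<le> x" and a: "1 \<le> a" and b: "1 \<le> b" and aX: "a \<le> x / \<alpha>" and bX: "b \<le> x / \<alpha>"
      and cases: "x \<le> 3 * a \<or> x \<le> 3 * b"
    define X where "X = x / \<alpha>"
    have X1: "1 \<le> X" unfolding X_def using x al by (simp add: le_divide_eq)
    have Xs: "X powr m = x powr m * \<alpha> powr (- m)" for m
      unfolding X_def using x al by (simp add: powr_div_split mult.commute)
    have "x powr (2 * \<sigma>) * a powr (- 2 * s1) * b powr (- 2 * s2) \<le> C1 * b powr (- t) + C2 * a powr (- t)"
    proof (cases "x \<le> 3 * a")
      case True
      have A: "a powr (- 2 * s1) \<le> (x / 3) powr (- 2 * s1)"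
        using True x h1 by (intro powr_mono2') auto
      have A': "(x / 3) powr (- 2 * s1) = x powr (- 2 * s1) * 3 powr (2 * s1)"
        using x by (simp add: powr_div_split mult.commute)
      have B: "b powr (t - 2 * s2) \<le> X powr m1"
        unfolding m1_def using b bX unfolding X_def by (intro powr_le_max) auto
      have "x powr (2 * \<sigma>) * a powr (- 2 * s1) * b powr (- 2 * s2)
          = x powr (2 * \<sigma>) * a powr (- 2 * s1) * (b powr (- t) * b powr (t - 2 * s2))"
        by (simp add: powr_add[symmetric])
      also have "\<dots> \<le> x powr (2 * \<sigma>) * (x powr (- 2 * s1) * 3 powr (2 * s1)) * (b powr (- t) * X powr m1)"
        using A A' B by (intro mult_mono) auto
      also have "\<dots> = x powr (2 * \<sigma> - 2 * s1 + m1) * C1 * b powr (- t)"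
        unfolding Xs C1_def by (simp add: powr_add[symmetric] algebra_simps)
      also have "x powr (2 * \<sigma> - 2 * s1 + m1) \<le> 1"
        using x dpos h1 h2 unfolding m1_def t_def \<delta>_def by (intro powr_le_one_neg) auto
      then have "x powr (2 * \<sigma> - 2 * s1 + m1) * C1 * b powr (- t) \<le> 1 * C1 * b powr (- t)"
        using C1p by (intro mult_right_mono) auto
      also have "\<dots> \<le> C1 * b powr (- t) + C2 * a powr (- t)"
        using C2p by simp
      finally show ?thesis .
    next
      case False
      then have xb: "x \<le> 3 * b" using cases by simp
      have B: "b powr (- 2 * s2) \<le> K2 * x powr (- 2 * s2)"
      proof (cases "s2 \<ge> 0")
        case True
        have "b powr (- 2 * s2) \<le> (x / 3) powr (- 2 * s2)"
          using xb x True by (intro powr_mono2') auto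
        then show ?thesis unfolding K2_def using True x by (simp add: powr_div_split mult.commute)
      next
        case False
        have "b powr (- 2 * s2) \<le> (x / \<alpha>) powr (- 2 * s2)"
          using bX b False by (intro powr_mono2) auto
        then show ?thesis unfolding K2_def using False x al by (simp add: powr_div_split mult.commute)
      qed
      have A: "a powr (t - 2 * s1) \<le> X powr m2"
        unfolding m2_def using a aX unfolding X_def by (intro powr_le_max) auto
      have "x powr (2 * \<sigma>) * a powr (- 2 * s1) * b powr (- 2 * s2)
          = x powr (2 * \<sigma>) * (a powr (- t) * a powr (t - 2 * s1)) * b powr (- 2 * s2)"
        by (simp add: powr_add[symmetric])
      also have "\<dots> \<le> x powr (2 * \<sigma>) * (a powr (- t) * X powr m2) * (K2 * x powr (- 2 * s2))"
        using A B by (intro mult_mono) auto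
      also have "\<dots> = x powr (2 * \<sigma> - 2 * s2 + m2) * C2 * a powr (- t)"
        unfolding Xs C2_def by (simp add: powr_add[symmetric] algebra_simps)
      also have "x powr (2 * \<sigma> - 2 * s2 + m2) \<le> 1"
        using x dpos h1 N unfolding m2_def t_def \<delta>_def by (intro powr_le_one_neg) auto
      then have "x powr (2 * \<sigma> - 2 * s2 + m2) * C2 * a powr (- t) \<le> 1 * C2 * a powr (- t)"
        using C2p by (intro mult_right_mono) auto
      also have "\<dots> \<le> C1 * b powr (- t) + C2 * a powr (- t)"
        using C1p by simp
      finally show ?thesis .
    qed
    also have "\<dots> \<le> C * (a powr (- t) + b powr (- t))"
      unfolding C_def using C1p C2p
      by (simp add: algebra_simps add_mono mult_left_mono)
    finally have "x powr (2 * \<sigma>) * a powr (- 2 * s1) * b powr (- 2 * s2) \<le> C * (a powr (- t) + b powr (- t))" .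
  }
  ultimately show ?thesis by blast
qed

lemma jp_le_1norm: "japanese x \<le> 1 + norm x"
  unfolding japanese_def by (rule real_le_lsqrt) (auto simp: power2_eq_square algebra_simps)

lemma geom:
  fixes \<eta> \<zeta> e :: "'a::euclidean_space"
  assumes al: "0 < \<alpha>" "\<alpha> \<le> 1" and ne: "norm e = 1"
    and h1: "\<alpha> * norm \<eta> \<le> \<eta> \<bullet> e" and h2: "\<alpha> * norm \<zeta> \<le> \<zeta> \<bullet> e"
  shows "japanese \<eta> \<le> japanese (\<eta> + \<zeta>) / \<alpha>" "japanese \<zeta> \<le> japanese (\<eta> + \<zeta>) / \<alpha>"
    "japanese (\<eta> + \<zeta>) \<le> 3 * japanese \<eta> \<or> japanese (\<eta> + \<zeta>) \<le> 3 * japanese \<zeta>"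
proof -
  have "(\<eta> + \<zeta>) \<bullet> e \<le> norm (\<eta> + \<zeta>)"
    using Cauchy_Schwarz_ineq2[of "\<eta> + \<zeta>" e] ne by simp
  then have S: "\<alpha> * norm \<eta> + \<alpha> * norm \<zeta> \<le> norm (\<eta> + \<zeta>)"
    using h1 h2 by (simp add: inner_add_left)
  have jp: "japanese u \<le> japanese (\<eta> + \<zeta>) / \<alpha>" if "\<alpha> * norm u \<le> norm (\<eta> + \<zeta>)" for u :: 'a
  proof -
    have n1: "norm u \<le> norm (\<eta> + \<zeta>) / \<alpha>" using that al by (simp add: field_simps)
    have "(norm u)\<^sup>2 \<le> (norm (\<eta> + \<zeta>) / \<alpha>)\<^sup>2"
      using n1 by (intro power_mono) auto
    also have "\<dots> = (norm (\<eta> + \<zeta>))\<^sup>2 / \<alpha>\<^sup>2" by (simp add: power_divide)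
    finally have "1 + (norm u)\<^sup>2 \<le> (1 + (norm (\<eta> + \<zeta>))\<^sup>2) / \<alpha>\<^sup>2"
    proof -
      assume a: "(norm u)\<^sup>2 \<le> (norm (\<eta> + \<zeta>))\<^sup>2 / \<alpha>\<^sup>2"
      have "1 \<le> 1 / \<alpha>\<^sup>2" using al by (simp add: power_le_one)
      then show ?thesis using a by (simp add: add_divide_distrib)
    qed
    then have "sqrt (1 + (norm u)\<^sup>2) \<le> sqrt ((1 + (norm (\<eta> + \<zeta>))\<^sup>2) / \<alpha>\<^sup>2)"
      by (rule real_sqrt_le_mono)
    also have "\<dots> = sqrt (1 + (norm (\<eta> + \<zeta>))\<^sup>2) / \<alpha>"
      using al by (simp add: real_sqrt_divide)
    finally show ?thesis unfolding japanese_def .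
  qed
  show "japanese \<eta> \<le> japanese (\<eta> + \<zeta>) / \<alpha>"
    using S al by (intro jp) (smt (verit) mult_nonneg_nonneg norm_ge_zero)
  show "japanese \<zeta> \<le> japanese (\<eta> + \<zeta>) / \<alpha>"
    using S al by (intro jp) (smt (verit) mult_nonneg_nonneg norm_ge_zero)
  have "japanese (\<eta> + \<zeta>) \<le> 1 + norm \<eta> + norm \<zeta>"
    using jp_le_1norm[of "\<eta> + \<zeta>"] norm_triangle_ineq[of \<eta> \<zeta>] by linarith
  moreover have "norm \<eta> < japanese \<eta>" "norm \<zeta> < japanese \<zeta>" "1 \<le> japanese \<eta>" "1 \<le> japanese \<zeta>"
    by (auto simp: jp_gt_norm jp_ge1)
  ultimately show "japanese (\<eta> + \<zeta>) \<le> 3 * japanese \<eta> \<or> japanese (\<eta> + \<zeta>) \<le> 3 * japanese \<zeta>"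
    by linarith
qed

lemma powr_sq: "0 < (a::real) \<Longrightarrow> (a powr p)\<^sup>2 = a powr (2 * p)"
  by (simp add: power2_eq_square powr_add[symmetric])

lemma main_estimate:
  fixes \<Gamma> :: "'a::euclidean_space set"
  assumes cc: "convex_cone \<Gamma>" and cl: "closed \<Gamma>"
    and al: "0 < \<alpha>" "\<alpha> \<le> 1" and ne: "norm e = 1" and eG: "\<forall>\<xi>\<in>\<Gamma>. \<alpha> * norm \<xi> \<le> \<xi> \<bullet> e"
    and C0: "C0 > 0" and t: "t > real DIM('a)"
    and pw: "\<forall>x a b. 1 \<le> x \<longrightarrow> 1 \<le> a \<longrightarrow> 1 \<le> b \<longrightarrow> a \<le> x / \<alpha> \<longrightarrow> b \<le> x / \<alpha>
     \<longrightarrow> (x \<le> 3 * a \<or> x \<le> 3 * b) \<longrightarrow>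
     x powr (2 * \<sigma>) * a powr (- 2 * s1) * b powr (- 2 * s2) \<le> C0 * (a powr (- t) + b powr (- t))"
  shows "product_estimate \<Gamma> s1 s2 \<sigma>"
proof -
  have [measurable]: "\<Gamma> \<in> sets borel" using cl by (simp add: borel_closed)
  define Jn where "Jn = (\<integral>\<^sup>+\<zeta>. ennreal (japanese (\<zeta>::'a) powr (-t)) \<partial>lborel)"
  have Jfin: "Jn < \<infinity>" unfolding Jn_def by (rule J_finite[OF t])
  define J where "J = enn2real Jn"
  have J0: "J \<ge> 0" unfolding J_def by simp
  have JnJ: "Jn = ennreal J" unfolding J_def using Jfin by simp
  define Cf where "Cf = sqrt (2 * C0 * J) + 1"
  have Cfp: "Cf > 0" unfolding Cf_def using C0 J0 by (simp add: add_nonneg_pos)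
  { fix F G :: "'a \<Rightarrow> complex"
    assume hF: "in_Hs_Gamma \<Gamma> s1 F" and hG: "in_Hs_Gamma \<Gamma> s2 G"
    have Fm[measurable]: "F \<in> borel_measurable borel" using hF by (simp add: in_Hs_Gamma_def in_Hs_def)
    have Gm[measurable]: "G \<in> borel_measurable borel" using hG by (simp add: in_Hs_Gamma_def in_Hs_def)
    define f where "f \<xi> = japanese \<xi> powr s1 * cmod (F \<xi>)" for \<xi>
    define g where "g \<xi> = japanese \<xi> powr s2 * cmod (G \<xi>)" for \<xi>
    have fm[measurable]: "f \<in> borel_measurable borel" unfolding f_def by measurable
    have gm[measurable]: "g \<in> borel_measurable borel" unfolding g_def by measurable
    have f0: "f \<xi> \<ge> 0" "g \<xi> \<ge> 0" for \<xi> unfolding f_def g_def by auto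
    have fi: "integrable lborel (\<lambda>\<xi>. (f \<xi>)\<^sup>2)" using hF by (simp add: in_Hs_Gamma_def in_Hs_def f_def)
    have gi: "integrable lborel (\<lambda>\<xi>. (g \<xi>)\<^sup>2)" using hG by (simp add: in_Hs_Gamma_def in_Hs_def g_def)
    have FAE: "AE \<xi> in lborel. \<xi> \<notin> \<Gamma> \<longrightarrow> F \<xi> = 0" using hF by (simp add: in_Hs_Gamma_def)
    have GAE: "AE \<xi> in lborel. \<xi> \<notin> \<Gamma> \<longrightarrow> G \<xi> = 0" using hG by (simp add: in_Hs_Gamma_def)
    define A where "A = (\<integral>\<xi>. (f \<xi>)\<^sup>2 \<partial>lborel)"
    define B where "B = (\<integral>\<xi>. (g \<xi>)\<^sup>2 \<partial>lborel)"
    have A0: "A \<ge> 0" "B \<ge> 0" unfolding A_def B_def by auto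
    have nA: "Hs_norm s1 F = sqrt A" unfolding Hs_norm_def A_def f_def ..
    have nB: "Hs_norm s2 G = sqrt B" unfolding Hs_norm_def B_def g_def ..
    have An: "(\<integral>\<^sup>+\<xi>. ennreal ((f \<xi>)\<^sup>2) \<partial>lborel) = ennreal A"
      unfolding A_def using fi by (intro nn_integral_eq_integral) auto
    have Bn: "(\<integral>\<^sup>+\<xi>. ennreal ((g \<xi>)\<^sup>2) \<partial>lborel) = ennreal B"
      unfolding B_def using gi by (intro nn_integral_eq_integral) auto
    define H where "H = fourier_product F G"
    have Hm[measurable]: "H \<in> borel_measurable borel"
    proof -
      have "(\<lambda>\<xi>. \<integral>\<eta>. F \<eta> * G (\<xi> - \<eta>) \<partial>lborel) \<in> borel_measurable lborel"
        by (rule lborel.borel_measurable_lebesgue_integral) simp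
      then show ?thesis unfolding H_def fourier_product_def by simp
    qed
    have Hsupp: "H \<xi> = 0" if "\<xi> \<notin> \<Gamma>" for \<xi>
    proof -
      have a2: "AE \<eta> in lborel. \<xi> - \<eta> \<notin> \<Gamma> \<longrightarrow> G (\<xi> - \<eta>) = 0"
        by (rule AE_reflect[OF _ GAE]) measurable
      have "AE \<eta> in lborel. F \<eta> * G (\<xi> - \<eta>) = 0"
        using FAE a2
      proof eventually_elim
        case (elim \<eta>)
        show ?case
        proof (cases "\<eta> \<in> \<Gamma> \<and> \<xi> - \<eta> \<in> \<Gamma>")
          case True
          then have "\<xi> \<in> \<Gamma>" using convex_cone_add[OF cc, of \<eta> "\<xi> - \<eta>"] by simp
          then show ?thesis using that by simp
        next
          case False then show ?thesis using elim by auto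
        qed
      qed
      then show ?thesis unfolding H_def fourier_product_def by (rule integral_eq_zero_AE)
    qed
    define I where "I \<xi> = (\<integral>\<^sup>+\<eta>. ennreal (cmod (F \<eta>) * cmod (G (\<xi> - \<eta>))) \<partial>lborel)" for \<xi>
    define w where "w \<xi> \<eta> = (if \<eta> \<in> \<Gamma> \<and> \<xi> - \<eta> \<in> \<Gamma> then japanese \<eta> powr (- s1) * japanese (\<xi> - \<eta>) powr (- s2) else 0)" for \<xi> \<eta>
    define P where "P \<xi> = (\<integral>\<^sup>+\<eta>. ennreal (f \<eta> * g (\<xi> - \<eta>)) ^ 2 \<partial>lborel)" for \<xi>
    define W where "W \<xi> = (\<integral>\<^sup>+\<eta>. ennreal (w \<xi> \<eta>) ^ 2 \<partial>lborel)" for \<xi>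
    have wm[measurable]: "w \<xi> \<in> borel_measurable borel" for \<xi>
      unfolding w_def by measurable
    have w0: "w \<xi> \<eta> \<ge> 0" for \<xi> \<eta> unfolding w_def by auto
    have HI: "ennreal (cmod (H \<xi>)) \<le> I \<xi>" for \<xi>
    proof (cases "integrable lborel (\<lambda>\<eta>. F \<eta> * G (\<xi> - \<eta>))")
      case True
      have "ennreal (cmod (H \<xi>)) \<le> (\<integral>\<^sup>+\<eta>. norm (F \<eta> * G (\<xi> - \<eta>)) \<partial>lborel)"
        unfolding H_def fourier_product_def using integral_norm_bound_ennreal[OF True] by simp
      then show ?thesis unfolding I_def by (simp add: norm_mult)
    next
      case False
      then have "H \<xi> = 0" unfolding H_def fourier_product_def by (rule not_integrable_integral_eq)
      then show ?thesis by simp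
    qed
    have IPW: "(I \<xi>) ^ 2 \<le> P \<xi> * W \<xi>" for \<xi>
    proof -
      have a2: "AE \<eta> in lborel. \<xi> - \<eta> \<notin> \<Gamma> \<longrightarrow> G (\<xi> - \<eta>) = 0"
        by (rule AE_reflect[OF _ GAE]) measurable
      have "AE \<eta> in lborel. ennreal (cmod (F \<eta>) * cmod (G (\<xi> - \<eta>))) = ennreal (f \<eta> * g (\<xi> - \<eta>)) * ennreal (w \<xi> \<eta>)"
        using FAE a2
      proof eventually_elim
        case (elim \<eta>)
        show ?case
        proof (cases "\<eta> \<in> \<Gamma> \<and> \<xi> - \<eta> \<in> \<Gamma>")
          case True
          have e1: "cmod (F \<eta>) = f \<eta> * japanese \<eta> powr (- s1)"
            unfolding f_def using jp_pos[of \<eta>] by (simp add: powr_add[symmetric])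
          have e2: "cmod (G (\<xi> - \<eta>)) = g (\<xi> - \<eta>) * japanese (\<xi> - \<eta>) powr (- s2)"
            unfolding g_def using jp_pos[of "\<xi> - \<eta>"] by (simp add: powr_add[symmetric])
          have "cmod (F \<eta>) * cmod (G (\<xi> - \<eta>)) = (f \<eta> * g (\<xi> - \<eta>)) * w \<xi> \<eta>"
            unfolding e1 e2 w_def using True by (simp add: ac_simps)
          then show ?thesis using f0 w0 by (simp add: ennreal_mult'')
        next
          case False
          then have "F \<eta> = 0 \<or> G (\<xi> - \<eta>) = 0" using elim by auto
          then show ?thesis unfolding w_def using False by auto
        qed
      qed
      then have eqI: "I \<xi> = (\<integral>\<^sup>+\<eta>. ennreal (f \<eta> * g (\<xi> - \<eta>)) * ennreal (w \<xi> \<eta>) \<partial>lborel)"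
        unfolding I_def by (rule nn_integral_cong_AE)
      show ?thesis unfolding eqI P_def W_def by (rule Cauchy_Schwarz_nn_integral) measurable
    qed
    have WB: "ennreal (japanese \<xi> powr (2 * \<sigma>)) * W \<xi> \<le> ennreal (2 * C0 * J)" for \<xi>
    proof -
      have "ennreal (japanese \<xi> powr (2 * \<sigma>)) * W \<xi> = (\<integral>\<^sup>+\<eta>. ennreal (japanese \<xi> powr (2 * \<sigma>)) * ennreal (w \<xi> \<eta>) ^ 2 \<partial>lborel)"
        unfolding W_def by (rule nn_integral_cmult[symmetric]) measurable
      also have "\<dots> \<le> (\<integral>\<^sup>+\<eta>. ennreal C0 * (ennreal (japanese \<eta> powr (- t)) + ennreal (japanese (\<xi> - \<eta>) powr (- t))) \<partial>lborel)"
      proof (rule nn_integral_mono)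
        fix \<eta>
        show "ennreal (japanese \<xi> powr (2 * \<sigma>)) * ennreal (w \<xi> \<eta>) ^ 2 \<le> ennreal C0 * (ennreal (japanese \<eta> powr (- t)) + ennreal (japanese (\<xi> - \<eta>) powr (- t)))"
        proof (cases "\<eta> \<in> \<Gamma> \<and> \<xi> - \<eta> \<in> \<Gamma>")
          case True
          have h1: "\<alpha> * norm \<eta> \<le> \<eta> \<bullet> e" and h2: "\<alpha> * norm (\<xi> - \<eta>) \<le> (\<xi> - \<eta>) \<bullet> e"
            using True eG by auto
          note gg = geom[OF al ne h1 h2]
          have s: "\<eta> + (\<xi> - \<eta>) = \<xi>" by simp
          have key: "japanese \<xi> powr (2 * \<sigma>) * japanese \<eta> powr (- 2 * s1) * japanese (\<xi> - \<eta>) powr (- 2 * s2)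
              \<le> C0 * (japanese \<eta> powr (- t) + japanese (\<xi> - \<eta>) powr (- t))"
            using pw[rule_format, OF jp_ge1 jp_ge1 jp_ge1 gg(1)[unfolded s] gg(2)[unfolded s] gg(3)[unfolded s]] .
          have wsq: "(w \<xi> \<eta>) ^ 2 = japanese \<eta> powr (- 2 * s1) * japanese (\<xi> - \<eta>) powr (- 2 * s2)"
            unfolding w_def using True by (simp add: power_mult_distrib powr_sq jp_pos)
          have "ennreal (japanese \<xi> powr (2 * \<sigma>)) * ennreal (w \<xi> \<eta>) ^ 2
              = ennreal (japanese \<xi> powr (2 * \<sigma>) * japanese \<eta> powr (- 2 * s1) * japanese (\<xi> - \<eta>) powr (- 2 * s2))"
          proof -
            have "ennreal (japanese \<xi> powr (2 * \<sigma>)) * ennreal (w \<xi> \<eta>) ^ 2 = ennreal (japanese \<xi> powr (2 * \<sigma>) * (w \<xi> \<eta>) ^ 2)"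
              using w0 by (simp add: ennreal_power ennreal_mult'')
            then show ?thesis unfolding wsq by (simp add: mult.assoc)
          qed
          also have "\<dots> \<le> ennreal (C0 * (japanese \<eta> powr (- t) + japanese (\<xi> - \<eta>) powr (- t)))"
            using key by (rule ennreal_leI)
          also have "\<dots> = ennreal C0 * (ennreal (japanese \<eta> powr (- t)) + ennreal (japanese (\<xi> - \<eta>) powr (- t)))"
            using C0 by (simp add: ennreal_mult)
          finally show ?thesis .
        next
          case False
          then have "w \<xi> \<eta> = 0" unfolding w_def by auto
          then show ?thesis by simp
        qed
      qed
      also have "\<dots> = ennreal C0 * ((\<integral>\<^sup>+\<eta>. ennreal (japanese (\<eta>::'a) powr (- t)) \<partial>lborel) + (\<integral>\<^sup>+\<eta>. ennreal (japanese (\<xi> - \<eta>) powr (- t)) \<partial>lborel))"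
      proof -
        have "(\<integral>\<^sup>+\<eta>. ennreal C0 * (ennreal (japanese \<eta> powr (- t)) + ennreal (japanese (\<xi> - \<eta>) powr (- t))) \<partial>lborel)
          = ennreal C0 * (\<integral>\<^sup>+\<eta>. (ennreal (japanese \<eta> powr (- t)) + ennreal (japanese (\<xi> - \<eta>) powr (- t))) \<partial>lborel)"
          by (rule nn_integral_cmult) measurable
        also have "(\<integral>\<^sup>+\<eta>. (ennreal (japanese \<eta> powr (- t)) + ennreal (japanese (\<xi> - \<eta>) powr (- t))) \<partial>lborel)
          = (\<integral>\<^sup>+\<eta>. ennreal (japanese (\<eta>::'a) powr (- t)) \<partial>lborel) + (\<integral>\<^sup>+\<eta>. ennreal (japanese (\<xi> - \<eta>) powr (- t)) \<partial>lborel)"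
          by (rule nn_integral_add) measurable
        finally show ?thesis .
      qed
      also have "(\<integral>\<^sup>+\<eta>. ennreal (japanese (\<xi> - \<eta>) powr (- t)) \<partial>lborel) = Jn"
        unfolding Jn_def by (rule nn_integral_reflect[where f = "\<lambda>\<eta>. ennreal (japanese \<eta> powr (- t))"]) measurable
      also have "(\<integral>\<^sup>+\<eta>. ennreal (japanese (\<eta>::'a) powr (- t)) \<partial>lborel) = Jn"
        by (simp add: Jn_def)
      also have "ennreal C0 * (Jn + Jn) = ennreal (2 * C0 * J)"
      proof -
        have e1: "ennreal J + ennreal J = ennreal (J + J)" by (rule ennreal_plus[symmetric]) (use J0 in auto)
        have e2: "ennreal C0 * ennreal (J + J) = ennreal (C0 * (J + J))"
          by (rule ennreal_mult[symmetric]) (use C0 J0 in auto)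
        have e3: "C0 * (J + J) = 2 * C0 * J" by simp
        show ?thesis unfolding JnJ e1 e2 e3 ..
      qed
      finally show ?thesis .
    qed
    have PT: "ennreal ((japanese \<xi> powr \<sigma> * cmod (H \<xi>))\<^sup>2) \<le> ennreal (2 * C0 * J) * P \<xi>" for \<xi>
    proof -
      have "ennreal ((japanese \<xi> powr \<sigma> * cmod (H \<xi>))\<^sup>2) = ennreal (japanese \<xi> powr (2 * \<sigma>)) * (ennreal (cmod (H \<xi>)))\<^sup>2"
        by (simp add: power_mult_distrib powr_sq jp_pos ennreal_mult'' ennreal_power)
      also have "\<dots> \<le> ennreal (japanese \<xi> powr (2 * \<sigma>)) * (I \<xi>)\<^sup>2"
        by (intro mult_left_mono power_mono HI) auto
      also have "\<dots> \<le> ennreal (japanese \<xi> powr (2 * \<sigma>)) * (P \<xi> * W \<xi>)"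
        by (intro mult_left_mono IPW) auto
      also have "\<dots> = (ennreal (japanese \<xi> powr (2 * \<sigma>)) * W \<xi>) * P \<xi>"
        by (simp add: ac_simps)
      also have "\<dots> \<le> ennreal (2 * C0 * J) * P \<xi>"
        by (intro mult_right_mono WB) auto
      finally show ?thesis .
    qed
    have intP: "(\<integral>\<^sup>+\<xi>. P \<xi> \<partial>lborel) = ennreal A * ennreal B"
    proof -
      have "(\<integral>\<^sup>+\<xi>. P \<xi> \<partial>lborel) = (\<integral>\<^sup>+\<xi>. (\<integral>\<^sup>+\<eta>. ennreal (f \<eta> * g (\<xi> - \<eta>)) ^ 2 \<partial>lborel) \<partial>lborel)"
        unfolding P_def ..
      also have "\<dots> = (\<integral>\<^sup>+\<eta>. (\<integral>\<^sup>+\<xi>. ennreal (f \<eta> * g (\<xi> - \<eta>)) ^ 2 \<partial>lborel) \<partial>lborel)"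
        by (rule lborel_pair.Fubini'[where f = "\<lambda>\<eta> \<xi>. ennreal (f \<eta> * g (\<xi> - \<eta>)) ^ 2"]) measurable
      also have "\<dots> = (\<integral>\<^sup>+\<eta>. ennreal ((f \<eta>)\<^sup>2) * ennreal B \<partial>lborel)"
      proof (rule nn_integral_cong)
        fix \<eta> :: 'a
        have "(\<integral>\<^sup>+\<xi>. ennreal (f \<eta> * g (\<xi> - \<eta>)) ^ 2 \<partial>lborel) = (\<integral>\<^sup>+\<xi>. ennreal ((f \<eta>)\<^sup>2) * ennreal ((g (\<xi> - \<eta>))\<^sup>2) \<partial>lborel)"
          using f0 by (intro nn_integral_cong) (simp add: ennreal_power ennreal_mult'' power_mult_distrib)
        also have "\<dots> = ennreal ((f \<eta>)\<^sup>2) * (\<integral>\<^sup>+\<xi>. ennreal ((g (\<xi> - \<eta>))\<^sup>2) \<partial>lborel)"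
          by (rule nn_integral_cmult) measurable
        also have "(\<integral>\<^sup>+\<xi>. ennreal ((g (\<xi> - \<eta>))\<^sup>2) \<partial>lborel) = (\<integral>\<^sup>+\<xi>. ennreal ((g \<xi>)\<^sup>2) \<partial>lborel)"
          by (rule nn_integral_shift[where f = "\<lambda>\<xi>. ennreal ((g \<xi>)\<^sup>2)"]) measurable
        finally show "(\<integral>\<^sup>+\<xi>. ennreal (f \<eta> * g (\<xi> - \<eta>)) ^ 2 \<partial>lborel) = ennreal ((f \<eta>)\<^sup>2) * ennreal B"
          unfolding Bn .
      qed
      also have "\<dots> = ennreal A * ennreal B"
        unfolding An[symmetric] by (rule nn_integral_multc) measurable
      finally show ?thesis .
    qed
    have Hest: "(\<integral>\<^sup>+\<xi>. ennreal ((japanese \<xi> powr \<sigma> * cmod (H \<xi>))\<^sup>2) \<partial>lborel) \<le> ennreal (2 * C0 * J * A * B)"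
    proof -
      have "(\<integral>\<^sup>+\<xi>. ennreal ((japanese \<xi> powr \<sigma> * cmod (H \<xi>))\<^sup>2) \<partial>lborel) \<le> (\<integral>\<^sup>+\<xi>. ennreal (2 * C0 * J) * P \<xi> \<partial>lborel)"
        by (rule nn_integral_mono, rule PT)
      also have "\<dots> = ennreal (2 * C0 * J) * (\<integral>\<^sup>+\<xi>. P \<xi> \<partial>lborel)"
        unfolding P_def by (rule nn_integral_cmult) measurable
      also have "\<dots> = ennreal (2 * C0 * J * A * B)"
        unfolding intP using C0 J0 A0 by (simp add: ennreal_mult'' mult.assoc)
      finally show ?thesis .
    qed
    have Hmeas2: "(\<lambda>\<xi>. (japanese \<xi> powr \<sigma> * cmod (H \<xi>))\<^sup>2) \<in> borel_measurable lborel" by simp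
    have Hint: "integrable lborel (\<lambda>\<xi>. (japanese \<xi> powr \<sigma> * cmod (H \<xi>))\<^sup>2)"
    proof (rule integrableI_bounded[OF Hmeas2])
      have "(\<integral>\<^sup>+\<xi>. ennreal (norm ((japanese \<xi> powr \<sigma> * cmod (H \<xi>))\<^sup>2)) \<partial>lborel)
          = (\<integral>\<^sup>+\<xi>. ennreal ((japanese \<xi> powr \<sigma> * cmod (H \<xi>))\<^sup>2) \<partial>lborel)" by simp
      also have "\<dots> < \<infinity>" using Hest by (simp add: le_less_trans)
      finally show "(\<integral>\<^sup>+\<xi>. ennreal (norm ((japanese \<xi> powr \<sigma> * cmod (H \<xi>))\<^sup>2)) \<partial>lborel) < \<infinity>" .
    qed
    have "(\<integral>\<xi>. (japanese \<xi> powr \<sigma> * cmod (H \<xi>))\<^sup>2 \<partial>lborel) \<le> 2 * C0 * J * A * B"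
    proof -
      have "(\<integral>\<xi>. (japanese \<xi> powr \<sigma> * cmod (H \<xi>))\<^sup>2 \<partial>lborel)
          = enn2real (\<integral>\<^sup>+\<xi>. ennreal ((japanese \<xi> powr \<sigma> * cmod (H \<xi>))\<^sup>2) \<partial>lborel)"
        by (rule integral_eq_nn_integral) auto
      also have "\<dots> \<le> 2 * C0 * J * A * B"
        using Hest C0 J0 A0 by (intro enn2real_leI) auto
      finally show ?thesis .
    qed
    then have "Hs_norm \<sigma> H \<le> sqrt (2 * C0 * J * A * B)"
      unfolding Hs_norm_def by simp
    also have "\<dots> = sqrt (2 * C0 * J) * Hs_norm s1 F * Hs_norm s2 G"
      unfolding nA nB by (simp add: real_sqrt_mult)
    also have "\<dots> \<le> Cf * Hs_norm s1 F * Hs_norm s2 G"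
      unfolding Cf_def nA nB using A0 by (intro mult_right_mono) auto
    finally have "Hs_norm \<sigma> H \<le> Cf * Hs_norm s1 F * Hs_norm s2 G" .
    moreover have "in_Hs_Gamma \<Gamma> \<sigma> H"
      unfolding in_Hs_Gamma_def in_Hs_def using Hint Hsupp by auto
    ultimately have "in_Hs_Gamma \<Gamma> \<sigma> (fourier_product F G) \<and>
        Hs_norm \<sigma> (fourier_product F G) \<le> Cf * Hs_norm s1 F * Hs_norm s2 G"
      unfolding H_def by simp
  }
  then show ?thesis unfolding product_estimate_def using Cfp by blast
qed

theorem proposition5p1:
  fixes \<Gamma> :: "'a::euclidean_space set"
  assumes "closed \<Gamma>" and "convex_cone \<Gamma>" and "acute_cone \<Gamma>"
  shows "(\<forall>s1 s2 \<sigma>. s1 \<le> 0 \<and> s2 \<le> real DIM('a) / 2 \<and> \<sigma> < - real DIM('a) / 2 + s1 + s2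
            \<longrightarrow> product_estimate \<Gamma> s1 s2 \<sigma>)
       \<and> (\<forall>s1 s2 \<sigma>. s1 \<ge> 0 \<and> \<sigma> \<le> s1 \<and> \<sigma> < - real DIM('a) / 2 + s2
            \<longrightarrow> product_estimate \<Gamma> s1 s2 \<sigma>)"
proof -
  obtain e :: 'a and \<alpha>0 where ne: "norm e = 1" and a0: "\<alpha>0 > 0"
    and sub: "\<Gamma> \<subseteq> {\<xi>. \<xi> \<bullet> e \<ge> \<alpha>0 * norm \<xi>}"
    using assms(3) unfolding acute_cone_def by blast
  define \<alpha> where "\<alpha> = min \<alpha>0 1"
  have al: "0 < \<alpha>" "\<alpha> \<le> 1" unfolding \<alpha>_def using a0 by auto
  have eG: "\<forall>\<xi>\<in>\<Gamma>. \<alpha> * norm \<xi> \<le> \<xi> \<bullet> e"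
  proof
    fix \<xi> assume "\<xi> \<in> \<Gamma>"
    then have "\<alpha>0 * norm \<xi> \<le> \<xi> \<bullet> e" using sub by auto
    moreover have "\<alpha> * norm \<xi> \<le> \<alpha>0 * norm \<xi>" unfolding \<alpha>_def by (intro mult_right_mono) auto
    ultimately show "\<alpha> * norm \<xi> \<le> \<xi> \<bullet> e" by linarith
  qed
  have N: "real DIM('a) \<ge> 0" by simp
  show ?thesis
  proof (intro conjI allI impI)
    fix s1 s2 \<sigma> :: real
    assume h: "s1 \<le> 0 \<and> s2 \<le> real DIM('a) / 2 \<and> \<sigma> < - real DIM('a) / 2 + s1 + s2"
    obtain C0 t where "C0 > 0" "t > real DIM('a)" and pw: "\<forall>x a b. 1 \<le> x \<longrightarrow> 1 \<le> a \<longrightarrow> 1 \<le> b \<longrightarrow> a \<le> x / \<alpha> \<longrightarrow> b \<le> x / \<alpha>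
     \<longrightarrow> (x \<le> 3 * a \<or> x \<le> 3 * b) \<longrightarrow>
     x powr (2 * \<sigma>) * a powr (- 2 * s1) * b powr (- 2 * s2) \<le> C0 * (a powr (- t) + b powr (- t))"
      using pointwise_a[OF N _ _ _ al] h by blast
    then show "product_estimate \<Gamma> s1 s2 \<sigma>"
      using main_estimate[OF assms(2) assms(1) al ne eG] by blast
  next
    fix s1 s2 \<sigma> :: real
    assume h: "s1 \<ge> 0 \<and> \<sigma> \<le> s1 \<and> \<sigma> < - real DIM('a) / 2 + s2"
    obtain C0 t where "C0 > 0" "t > real DIM('a)" and pw: "\<forall>x a b. 1 \<le> x \<longrightarrow> 1 \<le> a \<longrightarrow> 1 \<le> b \<longrightarrow> a \<le> x / \<alpha> \<longrightarrow> b \<le> x / \<alpha>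
     \<longrightarrow> (x \<le> 3 * a \<or> x \<le> 3 * b) \<longrightarrow>
     x powr (2 * \<sigma>) * a powr (- 2 * s1) * b powr (- 2 * s2) \<le> C0 * (a powr (- t) + b powr (- t))"
      using pointwise_b[OF N _ _ _ al] h by blast
    then show "product_estimate \<Gamma> s1 s2 \<sigma>"
      using main_estimate[OF assms(2) assms(1) al ne eG] by blast
  qed
qed

end
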